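(* Let $\mathcal{N}$ be an exact category, let $k\ge 1$, and let $\mathbb{P}=(P_*,d,d')$ be a binary acyclic complex in $\mathcal{N}$ supported on $[0,k]$. Let $\mathrm{sw}(\mathbb{P})=(P_*,d',d)$ be the binary acyclic complex obtained by switching top and bottom differential. Then $\mathrm{sw}(\mathbb{P})=-\mathbb{P}$ in $L_1^k(\mathcal{N})$.
   Context: A binary acyclic complex $\mathbb{P}=(P_*,d,d')$ in $\mathcal{N}$ is a graded object $P_*$ of $\mathcal{N}$ supported on a finite subset of $[0,\infty)$, together with two degree $-1$ maps $d,d'$ (top and bottom differentials) such that both $\mathbb{P}^\top=(P_*,d)$ and $\mathbb{P}^\bot=(P_*,d')$ are acyclic chain complexes (each differential $P_n\to P_{n-1}$ factors as an admissible epimorphism $P_n\twoheadrightarrow J_{n-1}$ followed by an admissible monomorphism $J_{n-1}\rightarrowtail P_{n-1}$ with $J_n\rightarrowtail P_n\twoheadrightarrow J_{n-1}$ short exact for all $n$). It is diagonal if $d=d'$. Morphisms are degree-$0$ maps that are chain maps for both differentials; with degreewise short exact sequences these form an exact category. For $k\ge0$, $B_1^k(\mathcal{N})$ is the Grothendieck group of the exact category of binary acyclic complexes supported on $[0,k]$, and $K_1^k(\mathcal{N})$ is its quotient by classes of diagonal complexes. For isomorphisms $\alpha,\beta\colon P\to Q$, $\langle\alpha,\beta\rangle$ is the class of the binary complex with $P$ in degree $1$, $Q$ in degree $0$, top differential $\alpha$, bottom differential $\beta$. A binary ladder is $(\mathbb{P},\mathbb{Q},\sigma,\tau)$ with $\sigma\colon\mathbb{P}^\top\to\mathbb{Q}^\top$,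 $\tau\colon\mathbb{P}^\bot\to\mathbb{Q}^\bot$ chain isomorphisms. For $k\ge1$, $L_1^k(\mathcal{N})$ is the quotient of $K_1^k(\mathcal{N})$ by the relations $\mathbb{Q}-\mathbb{P}=\sum_{i=0}^k(-1)^i\langle\sigma_i,\tau_i\rangle$ for all binary ladders with $\mathbb{P},\mathbb{Q}$ supported on $[0,k]$, $P_i=Q_i$ for all $i$, and all $\sigma_i,\tau_i$ involutions. *)

theory Defs
  imports Main
begin

text \<open>A (small) category with objects of type 'o and morphisms of type 'm,
 equipped with an additive structure on hom sets and a class of conflations
 (pairs (i,p) of an admissible monomorphism i and admissible epimorphism p).
 Cmp g f is the composite g o f.\<close>

record ('o,'m) excat =
  Obj :: "'o set"
  Hom :: "'o \<Rightarrow> 'o \<Rightarrow> 'm set"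
  Cmp :: "'m \<Rightarrow> 'm \<Rightarrow> 'm"
  Idm :: "'o \<Rightarrow> 'm"
  Add :: "'m \<Rightarrow> 'm \<Rightarrow> 'm"
  Neg :: "'m \<Rightarrow> 'm"
  Zm  :: "'o \<Rightarrow> 'o \<Rightarrow> 'm"
  Confl :: "('m \<times> 'm) set"

definition category :: "('o,'m) excat \<Rightarrow> bool" where
  "category C \<longleftrightarrow>
    (\<forall>X Y. X \<notin> Obj C \<or> Y \<notin> Obj C \<longrightarrow> Hom C X Y = {}) \<and>
    (\<forall>X Y X' Y' f. f \<in> Hom C X Y \<and> f \<in> Hom C X' Y' \<longrightarrow> X = X' \<and> Y = Y') \<and>
    (\<forall>X\<in>Obj C. Idm C X \<in> Hom C X X) \<and>
    (\<forall>X Y Z f g. f \<in> Hom C X Y \<longrightarrow> g \<in> Hom C Y Z \<longrightarrow> Cmp C g f \<in> Hom C X Z) \<and>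
    (\<forall>W X Y Z f g h. f \<in> Hom C W X \<longrightarrow> g \<in> Hom C X Y \<longrightarrow> h \<in> Hom C Y Z \<longrightarrow>
        Cmp C h (Cmp C g f) = Cmp C (Cmp C h g) f) \<and>
    (\<forall>X Y f. f \<in> Hom C X Y \<longrightarrow> Cmp C (Idm C Y) f = f \<and> Cmp C f (Idm C X) = f)"

definition preadditive :: "('o,'m) excat \<Rightarrow> bool" where
  "preadditive C \<longleftrightarrow> category C \<and>
    (\<forall>X\<in>Obj C. \<forall>Y\<in>Obj C.
       Zm C X Y \<in> Hom C X Y \<and>
       (\<forall>f\<in>Hom C X Y. \<forall>g\<in>Hom C X Y. Add C f g \<in> Hom C X Y \<and> Add C f g = Add C g f) \<and>
       (\<forall>f\<in>Hom C X Y. \<forall>g\<in>Hom C X Y. \<forall>h\<in>Hom C X Y.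
           Add C (Add C f g) h = Add C f (Add C g h)) \<and>
       (\<forall>f\<in>Hom C X Y. Neg C f \<in> Hom C X Y \<and> Add C f (Zm C X Y) = f \<and>
           Add C f (Neg C f) = Zm C X Y)) \<and>
    (\<forall>X Y Z f g g'. f \<in> Hom C X Y \<longrightarrow> g \<in> Hom C Y Z \<longrightarrow> g' \<in> Hom C Y Z \<longrightarrow>
        Cmp C (Add C g g') f = Add C (Cmp C g f) (Cmp C g' f)) \<and>
    (\<forall>X Y Z f f' g. f \<in> Hom C X Y \<longrightarrow> f' \<in> Hom C X Y \<longrightarrow> g \<in> Hom C Y Z \<longrightarrow>
        Cmp C g (Add C f f') = Add C (Cmp C g f) (Cmp C g f'))"

definition zero_obj :: "('o,'m) excat \<Rightarrow> 'o \<Rightarrow> bool" where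
  "zero_obj C Z \<longleftrightarrow> Z \<in> Obj C \<and>
     (\<forall>X\<in>Obj C. (\<exists>!f. f \<in> Hom C Z X) \<and> (\<exists>!f. f \<in> Hom C X Z))"

definition additive :: "('o,'m) excat \<Rightarrow> bool" where
  "additive C \<longleftrightarrow> preadditive C \<and> (\<exists>Z. zero_obj C Z) \<and>
    (\<forall>A\<in>Obj C. \<forall>B\<in>Obj C. \<exists>S i1 i2 p1 p2.
       i1 \<in> Hom C A S \<and> i2 \<in> Hom C B S \<and> p1 \<in> Hom C S A \<and> p2 \<in> Hom C S B \<and>
       Cmp C p1 i1 = Idm C A \<and> Cmp C p2 i2 = Idm C B \<and>
       Cmp C p2 i1 = Zm C A B \<and> Cmp C p1 i2 = Zm C B A \<and>
       Add C (Cmp C i1 p1) (Cmp C i2 p2) = Idm C S)"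

definition is_iso :: "('o,'m) excat \<Rightarrow> 'm \<Rightarrow> 'o \<Rightarrow> 'o \<Rightarrow> bool" where
  "is_iso C f X Y \<longleftrightarrow> f \<in> Hom C X Y \<and>
     (\<exists>g\<in>Hom C Y X. Cmp C g f = Idm C X \<and> Cmp C f g = Idm C Y)"

definition kc_pair :: "('o,'m) excat \<Rightarrow> 'm \<Rightarrow> 'm \<Rightarrow> bool" where
  "kc_pair C i p \<longleftrightarrow> (\<exists>A B D. i \<in> Hom C A B \<and> p \<in> Hom C B D \<and>
     Cmp C p i = Zm C A D \<and>
     (\<forall>X\<in>Obj C. \<forall>f\<in>Hom C X B. Cmp C p f = Zm C X D \<longrightarrow>
         (\<exists>!g. g \<in> Hom C X A \<and> Cmp C i g = f)) \<and>
     (\<forall>X\<in>Obj C. \<forall>f\<in>Hom C B X. Cmp C f i = Zm C A X \<longrightarrow>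
         (\<exists>!g. g \<in> Hom C D X \<and> Cmp C g p = f)))"

definition adm_mono :: "('o,'m) excat \<Rightarrow> 'm \<Rightarrow> bool" where
  "adm_mono C i \<longleftrightarrow> (\<exists>p. (i, p) \<in> Confl C)"

definition adm_epi :: "('o,'m) excat \<Rightarrow> 'm \<Rightarrow> bool" where
  "adm_epi C p \<longleftrightarrow> (\<exists>i. (i, p) \<in> Confl C)"

text \<open>Exact category in the sense of Quillen, with the axioms as in Buehler,
  "Exact categories", Def. 2.1.\<close>
definition exact_category :: "('o,'m) excat \<Rightarrow> bool" where
  "exact_category C \<longleftrightarrow> additive C \<and>
    (\<forall>(i,p)\<in>Confl C. kc_pair C i p) \<and>
    (\<forall>i p i' p' A B D A' B' D' a b c.
        (i, p) \<in> Confl C \<and> i \<in> Hom C A B \<and> p \<in> Hom C B D \<and>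
        i' \<in> Hom C A' B' \<and> p' \<in> Hom C B' D' \<and>
        is_iso C a A A' \<and> is_iso C b B B' \<and> is_iso C c D D' \<and>
        Cmp C i' a = Cmp C b i \<and> Cmp C p' b = Cmp C c p \<longrightarrow> (i', p') \<in> Confl C) \<and>
    (\<forall>A\<in>Obj C. adm_mono C (Idm C A)) \<and>
    (\<forall>A\<in>Obj C. adm_epi C (Idm C A)) \<and>
    (\<forall>A B D i j. i \<in> Hom C A B \<and> j \<in> Hom C B D \<and> adm_mono C i \<and> adm_mono C j
        \<longrightarrow> adm_mono C (Cmp C j i)) \<and>
    (\<forall>A B D p q. p \<in> Hom C A B \<and> q \<in> Hom C B D \<and> adm_epi C p \<and> adm_epi C q
        \<longrightarrow> adm_epi C (Cmp C q p)) \<and>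
    (\<forall>A B A' i f. i \<in> Hom C A B \<and> adm_mono C i \<and> f \<in> Hom C A A' \<longrightarrow>
        (\<exists>B' i' f'. i' \<in> Hom C A' B' \<and> f' \<in> Hom C B B' \<and>
           Cmp C i' f = Cmp C f' i \<and> adm_mono C i' \<and>
           (\<forall>X\<in>Obj C. \<forall>g\<in>Hom C A' X. \<forall>h\<in>Hom C B X. Cmp C g f = Cmp C h i \<longrightarrow>
               (\<exists>!u. u \<in> Hom C B' X \<and> Cmp C u i' = g \<and> Cmp C u f' = h)))) \<and>
    (\<forall>B D D' p f. p \<in> Hom C B D \<and> adm_epi C p \<and> f \<in> Hom C D' D \<longrightarrow>
        (\<exists>B' p' f'. p' \<in> Hom C B' D' \<and> f' \<in> Hom C B' B \<and>
           Cmp C p f' = Cmp C f p' \<and> adm_epi C p' \<and>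
           (\<forall>X\<in>Obj C. \<forall>g\<in>Hom C X D'. \<forall>h\<in>Hom C X B. Cmp C f g = Cmp C p h \<longrightarrow>
               (\<exists>!u. u \<in> Hom C X B' \<and> Cmp C p' u = g \<and> Cmp C f' u = h))))"

text \<open>A binary complex: graded object (indexed by int), top differential, bottom
  differential. d n : P n -> P (n - 1).\<close>
type_synonym ('o,'m) bcx = "(int \<Rightarrow> 'o) \<times> (int \<Rightarrow> 'm) \<times> (int \<Rightarrow> 'm)"

definition acyclic :: "('o,'m) excat \<Rightarrow> (int \<Rightarrow> 'o) \<Rightarrow> (int \<Rightarrow> 'm) \<Rightarrow> bool" where
  "acyclic C P d \<longleftrightarrow> (\<exists>J e m. \<forall>n.
      J n \<in> Obj C \<and> e n \<in> Hom C (P n) (J (n - 1)) \<and> m n \<in> Hom C (J n) (P n) \<and>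
      d n = Cmp C (m (n - 1)) (e n) \<and> (m n, e n) \<in> Confl C)"

definition is_bcx :: "('o,'m) excat \<Rightarrow> nat \<Rightarrow> ('o,'m) bcx \<Rightarrow> bool" where
  "is_bcx C k X \<longleftrightarrow> (case X of (P, d, d') \<Rightarrow>
     (\<forall>n. P n \<in> Obj C \<and> d n \<in> Hom C (P n) (P (n - 1)) \<and> d' n \<in> Hom C (P n) (P (n - 1))) \<and>
     (\<forall>n. n < 0 \<or> n > int k \<longrightarrow> zero_obj C (P n)) \<and>
     acyclic C P d \<and> acyclic C P d')"

definition chain_map :: "('o,'m) excat \<Rightarrow> (int \<Rightarrow> 'o) \<Rightarrow> (int \<Rightarrow> 'm) \<Rightarrow>
    (int \<Rightarrow> 'o) \<Rightarrow> (int \<Rightarrow> 'm) \<Rightarrow> (int \<Rightarrow> 'm) \<Rightarrow> bool" where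
  "chain_map C P d Q e f \<longleftrightarrow>
     (\<forall>n. f n \<in> Hom C (P n) (Q n) \<and> Cmp C (f (n - 1)) (d n) = Cmp C (e n) (f n))"

definition bmor :: "('o,'m) excat \<Rightarrow> ('o,'m) bcx \<Rightarrow> ('o,'m) bcx \<Rightarrow> (int \<Rightarrow> 'm) \<Rightarrow> bool" where
  "bmor C X Y f \<longleftrightarrow> (case X of (P, d, d') \<Rightarrow> case Y of (Q, e, e') \<Rightarrow>
     chain_map C P d Q e f \<and> chain_map C P d' Q e' f)"

definition diagonal :: "('o,'m) bcx \<Rightarrow> bool" where
  "diagonal X \<longleftrightarrow> fst (snd X) = snd (snd X)"

definition sw :: "('o,'m) bcx \<Rightarrow> ('o,'m) bcx" where
  "sw X = (case X of (P, d, d') \<Rightarrow> (P, d', d))"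

definition bpair :: "('o,'m) excat \<Rightarrow> 'o \<Rightarrow> 'o \<Rightarrow> 'm \<Rightarrow> 'm \<Rightarrow> ('o,'m) bcx" where
  "bpair C X Y \<alpha> \<beta> =
    (let Z = (SOME z. zero_obj C z);
         P = (\<lambda>n::int. if n = 1 then X else if n = 0 then Y else Z)
     in (P, (\<lambda>n. if n = 1 then \<alpha> else Zm C (P n) (P (n - 1))),
            (\<lambda>n. if n = 1 then \<beta> else Zm C (P n) (P (n - 1)))))"

text \<open>Elements of the free abelian group on a type 'c are represented as
  integer-valued functions; gen x is the basis element of x.\<close>
definition gen :: "'c \<Rightarrow> 'c \<Rightarrow> int" where
  "gen x = (\<lambda>y. if y = x then 1 else 0)"

inductive_set zspan :: "('c \<Rightarrow> int) set \<Rightarrow> ('c \<Rightarrow> int) set" for R where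
  zspan_zero: "(\<lambda>_. 0) \<in> zspan R"
| zspan_base: "r \<in> R \<Longrightarrow> r \<in> zspan R"
| zspan_diff: "a \<in> zspan R \<Longrightarrow> b \<in> zspan R \<Longrightarrow> (\<lambda>x. a x - b x) \<in> zspan R"

text \<open>Relations of B_1^k: short exact sequences in the exact category of binary
  acyclic complexes supported on [0,k] (degreewise conflations).\<close>
definition rel_B :: "('o,'m) excat \<Rightarrow> nat \<Rightarrow> (('o,'m) bcx \<Rightarrow> int) set" where
  "rel_B C k = {(\<lambda>z. gen B z - gen A z - gen D z) | A B D i p.
      is_bcx C k A \<and> is_bcx C k B \<and> is_bcx C k D \<and> bmor C A B i \<and> bmor C B D p \<and>
      (\<forall>n. (i n, p n) \<in> Confl C)}"

text \<open>Additional relations of K_1^k: classes of diagonal complexes.\<close>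
definition rel_K :: "('o,'m) excat \<Rightarrow> nat \<Rightarrow> (('o,'m) bcx \<Rightarrow> int) set" where
  "rel_K C k = {gen X | X. is_bcx C k X \<and> diagonal X}"

text \<open>Additional relations of L_1^k: binary ladders with P_i = Q_i and all
  sigma_i, tau_i involutions.\<close>
definition rel_L :: "('o,'m) excat \<Rightarrow> nat \<Rightarrow> (('o,'m) bcx \<Rightarrow> int) set" where
  "rel_L C k = {(\<lambda>z. gen (P, e, e') z - gen (P, d, d') z
        - (\<Sum>i\<in>{0..k}. (-1) ^ i * gen (bpair C (P (int i)) (P (int i)) (\<sigma> (int i)) (\<tau> (int i))) z))
      | P d d' e e' \<sigma> \<tau>.
      is_bcx C k (P, d, d') \<and> is_bcx C k (P, e, e') \<and>
      chain_map C P d P e \<sigma> \<and> chain_map C P d' P e' \<tau> \<and>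
      (\<forall>n. Cmp C (\<sigma> n) (\<sigma> n) = Idm C (P n) \<and> Cmp C (\<tau> n) (\<tau> n) = Idm C (P n))}"

definition L1_eq :: "('o,'m) excat \<Rightarrow> nat \<Rightarrow> (('o,'m) bcx \<Rightarrow> int) \<Rightarrow> (('o,'m) bcx \<Rightarrow> int) \<Rightarrow> bool" where
  "L1_eq C k a b \<longleftrightarrow> (\<lambda>z. a z - b z) \<in> zspan (rel_B C k \<union> rel_K C k \<union> rel_L C k)"

end

theory Submission
  imports Defs
begin

locale xc =
  fixes C :: "('o,'m) excat"
  assumes ex: "exact_category C"
begin

abbreviation cmp (infixr "\<odot>" 70) where "g \<odot> f \<equiv> Cmp C g f"
abbreviation add (infixl "\<oplus>" 65) where "f \<oplus> g \<equiv> Add C f g"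

lemma addv: "additive C" using ex unfolding exact_category_def by blast
lemma pre: "preadditive C" using addv unfolding additive_def by blast
lemma cat: "category C" using pre unfolding preadditive_def by blast

definition arr where "arr f \<longleftrightarrow> (\<exists>X Y. f \<in> Hom C X Y)"
definition dom where "dom f = (THE X. \<exists>Y. f \<in> Hom C X Y)"
definition cod where "cod f = (THE Y. \<exists>X. f \<in> Hom C X Y)"

lemma hom_uniq: "f \<in> Hom C X Y \<Longrightarrow> f \<in> Hom C X' Y' \<Longrightarrow> X = X' \<and> Y = Y'"
  using cat unfolding category_def by (elim conjE) metis

lemma hom_obj: "f \<in> Hom C X Y \<Longrightarrow> X \<in> Obj C \<and> Y \<in> Obj C"
  using cat unfolding category_def by (elim conjE) (metis empty_iff)

lemma homD: assumes "f \<in> Hom C X Y" shows "arr f" "dom f = X" "cod f = Y"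
proof -
  show "arr f" using assms arr_def by blast
  show "dom f = X" unfolding dom_def using assms hom_uniq by blast
  show "cod f = Y" unfolding cod_def using assms hom_uniq by blast
qed

lemma arrD: "arr f \<Longrightarrow> f \<in> Hom C (dom f) (cod f)"
  using homD arr_def by metis

lemma arr_obj: "arr f \<Longrightarrow> dom f \<in> Obj C" "arr f \<Longrightarrow> cod f \<in> Obj C"
  using arrD hom_obj by blast+

lemma comp_hom: "f \<in> Hom C X Y \<Longrightarrow> g \<in> Hom C Y Z \<Longrightarrow> g \<odot> f \<in> Hom C X Z"
  using cat unfolding category_def by blast

lemma id_hom: "X \<in> Obj C \<Longrightarrow> Idm C X \<in> Hom C X X"
  using cat unfolding category_def by blast

lemma assoc_h: "f \<in> Hom C W X \<Longrightarrow> g \<in> Hom C X Y \<Longrightarrow> h \<in> Hom C Y Z \<Longrightarrow>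
   (h \<odot> g) \<odot> f = h \<odot> (g \<odot> f)"
  using cat unfolding category_def by metis

lemma idl_h: "f \<in> Hom C X Y \<Longrightarrow> Idm C Y \<odot> f = f" and idr_h: "f \<in> Hom C X Y \<Longrightarrow> f \<odot> Idm C X = f"
  using cat unfolding category_def by blast+

lemma preP: "\<forall>X\<in>Obj C. \<forall>Y\<in>Obj C.
       Zm C X Y \<in> Hom C X Y \<and>
       (\<forall>f\<in>Hom C X Y. \<forall>g\<in>Hom C X Y. Add C f g \<in> Hom C X Y \<and> Add C f g = Add C g f) \<and>
       (\<forall>f\<in>Hom C X Y. \<forall>g\<in>Hom C X Y. \<forall>h\<in>Hom C X Y.
           Add C (Add C f g) h = Add C f (Add C g h)) \<and>
       (\<forall>f\<in>Hom C X Y. Neg C f \<in> Hom C X Y \<and> Add C f (Zm C X Y) = f \<and>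
           Add C f (Neg C f) = Zm C X Y)"
  using pre unfolding preadditive_def by (elim conjE) assumption
lemma preL: "\<forall>X Y Z f g g'. f \<in> Hom C X Y \<longrightarrow> g \<in> Hom C Y Z \<longrightarrow> g' \<in> Hom C Y Z \<longrightarrow>
        Cmp C (Add C g g') f = Add C (Cmp C g f) (Cmp C g' f)"
  using pre unfolding preadditive_def by (elim conjE) assumption
lemma preR: "\<forall>X Y Z f f' g. f \<in> Hom C X Y \<longrightarrow> f' \<in> Hom C X Y \<longrightarrow> g \<in> Hom C Y Z \<longrightarrow>
        Cmp C g (Add C f f') = Add C (Cmp C g f) (Cmp C g f')"
  using pre unfolding preadditive_def by (elim conjE) assumption

lemma zero_hom: "X \<in> Obj C \<Longrightarrow> Y \<in> Obj C \<Longrightarrow> Zm C X Y \<in> Hom C X Y"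
  using preP by simp

lemma add_hom: "f \<in> Hom C X Y \<Longrightarrow> g \<in> Hom C X Y \<Longrightarrow> f \<oplus> g \<in> Hom C X Y"
  using preP hom_obj by meson

lemma add_comm_h: "f \<in> Hom C X Y \<Longrightarrow> g \<in> Hom C X Y \<Longrightarrow> f \<oplus> g = g \<oplus> f"
  using preP hom_obj by meson

lemma add_assoc_h: "f \<in> Hom C X Y \<Longrightarrow> g \<in> Hom C X Y \<Longrightarrow> h \<in> Hom C X Y \<Longrightarrow> (f \<oplus> g) \<oplus> h = f \<oplus> (g \<oplus> h)"
  using preP hom_obj by meson

lemma add_zero_h: "f \<in> Hom C X Y \<Longrightarrow> f \<oplus> Zm C X Y = f"
  using preP hom_obj by meson

lemma neg_h: "f \<in> Hom C X Y \<Longrightarrow> Neg C f \<in> Hom C X Y \<and> f \<oplus> Neg C f = Zm C X Y"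
  using preP hom_obj by meson

lemma distr_l_h: "f \<in> Hom C X Y \<Longrightarrow> g \<in> Hom C Y Z \<Longrightarrow> g' \<in> Hom C Y Z \<Longrightarrow> (g \<oplus> g') \<odot> f = (g \<odot> f) \<oplus> (g' \<odot> f)"
  using preL by blast

lemma distr_r_h: "f \<in> Hom C X Y \<Longrightarrow> f' \<in> Hom C X Y \<Longrightarrow> g \<in> Hom C Y Z \<Longrightarrow> g \<odot> (f \<oplus> f') = (g \<odot> f) \<oplus> (g \<odot> f')"
  using preR by blast

lemma add_cancel_h: assumes "f \<in> Hom C X Y" "g \<in> Hom C X Y" "h \<in> Hom C X Y" "f \<oplus> g = f \<oplus> h"
  shows "g = h"
proof -
  obtain n where n: "n \<in> Hom C X Y" "f \<oplus> n = Zm C X Y" using neg_h assms by blast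
  have "g = (n \<oplus> f) \<oplus> g" using assms n add_comm_h add_zero_h zero_hom hom_obj by metis
  also have "\<dots> = n \<oplus> (f \<oplus> h)" using assms n add_assoc_h by metis
  also have "\<dots> = (n \<oplus> f) \<oplus> h" using assms n add_assoc_h by metis
  also have "\<dots> = h" using assms n add_comm_h add_zero_h zero_hom hom_obj by metis
  finally show ?thesis .
qed

lemma comp_zero_h: assumes "f \<in> Hom C Y Z" "W \<in> Obj C" shows "f \<odot> Zm C W Y = Zm C W Z"
proof -
  have Y: "Y \<in> Obj C" "Z \<in> Obj C" using assms hom_obj by auto
  have zz: "Zm C W Y \<oplus> Zm C W Y = Zm C W Y" using add_zero_h zero_hom Y assms by blast
  have h: "f \<odot> Zm C W Y \<in> Hom C W Z" using comp_hom zero_hom assms Y by blast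
  have "(f \<odot> Zm C W Y) \<oplus> (f \<odot> Zm C W Y) = (f \<odot> Zm C W Y) \<oplus> Zm C W Z"
    using distr_r_h[of "Zm C W Y" W Y "Zm C W Y" f Z] zz assms Y zero_hom add_zero_h[OF h] by metis
  thus ?thesis using add_cancel_h h zero_hom Y assms by blast
qed

lemma zero_comp_h: assumes "f \<in> Hom C W X" "Y \<in> Obj C" shows "Zm C X Y \<odot> f = Zm C W Y"
proof -
  have Y: "W \<in> Obj C" "X \<in> Obj C" using assms hom_obj by auto
  have zz: "Zm C X Y \<oplus> Zm C X Y = Zm C X Y" using add_zero_h zero_hom Y assms by blast
  have h: "Zm C X Y \<odot> f \<in> Hom C W Y" using comp_hom zero_hom assms Y by blast
  have "(Zm C X Y \<odot> f) \<oplus> (Zm C X Y \<odot> f) = (Zm C X Y \<odot> f) \<oplus> Zm C W Y"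
    using distr_l_h[of f W X "Zm C X Y" Y "Zm C X Y"] zz assms Y zero_hom add_zero_h[OF h] by metis
  thus ?thesis using add_cancel_h h zero_hom Y assms by blast
qed


lemma arr_comp[simp]: "arr f \<Longrightarrow> arr g \<Longrightarrow> dom g = cod f \<Longrightarrow> arr (g \<odot> f)"
  by (metis arrD comp_hom homD(1))
lemma dom_comp[simp]: "arr f \<Longrightarrow> arr g \<Longrightarrow> dom g = cod f \<Longrightarrow> dom (g \<odot> f) = dom f"
  by (metis arrD comp_hom homD(2))
lemma cod_comp[simp]: "arr f \<Longrightarrow> arr g \<Longrightarrow> dom g = cod f \<Longrightarrow> cod (g \<odot> f) = cod g"
  by (metis arrD comp_hom homD(3))
lemma assoc[simp]: "arr f \<Longrightarrow> arr g \<Longrightarrow> arr h \<Longrightarrow> dom g = cod f \<Longrightarrow> dom h = cod g \<Longrightarrow>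
   (h \<odot> g) \<odot> f = h \<odot> (g \<odot> f)"
  by (metis arrD assoc_h)
lemma arr_id[simp]: "X \<in> Obj C \<Longrightarrow> arr (Idm C X)" and dom_id[simp]: "X \<in> Obj C \<Longrightarrow> dom (Idm C X) = X"
  and cod_id[simp]: "X \<in> Obj C \<Longrightarrow> cod (Idm C X) = X"
  using id_hom homD by blast+
lemma idl[simp]: "arr f \<Longrightarrow> Y = cod f \<Longrightarrow> Idm C Y \<odot> f = f"
  by (metis arrD idl_h)
lemma idr[simp]: "arr f \<Longrightarrow> X = dom f \<Longrightarrow> f \<odot> Idm C X = f"
  by (metis arrD idr_h)
lemma arr_zero[simp]: "X \<in> Obj C \<Longrightarrow> Y \<in> Obj C \<Longrightarrow> arr (Zm C X Y)"
  and dom_zero[simp]: "X \<in> Obj C \<Longrightarrow> Y \<in> Obj C \<Longrightarrow> dom (Zm C X Y) = X"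
  and cod_zero[simp]: "X \<in> Obj C \<Longrightarrow> Y \<in> Obj C \<Longrightarrow> cod (Zm C X Y) = Y"
  using zero_hom homD by blast+
lemma arr_add[simp]: "arr f \<Longrightarrow> arr g \<Longrightarrow> dom g = dom f \<Longrightarrow> cod g = cod f \<Longrightarrow> arr (f \<oplus> g)"
  by (metis arrD add_hom homD(1))
lemma dom_add[simp]: "arr f \<Longrightarrow> arr g \<Longrightarrow> dom g = dom f \<Longrightarrow> cod g = cod f \<Longrightarrow> dom (f \<oplus> g) = dom f"
  by (metis arrD add_hom homD(2))
lemma cod_add[simp]: "arr f \<Longrightarrow> arr g \<Longrightarrow> dom g = dom f \<Longrightarrow> cod g = cod f \<Longrightarrow> cod (f \<oplus> g) = cod f"
  by (metis arrD add_hom homD(3))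
lemma distl[simp]: "arr f \<Longrightarrow> arr g \<Longrightarrow> arr g' \<Longrightarrow> dom g = cod f \<Longrightarrow> dom g' = dom g \<Longrightarrow> cod g' = cod g \<Longrightarrow>
   (g \<oplus> g') \<odot> f = (g \<odot> f) \<oplus> (g' \<odot> f)"
  by (metis arrD distr_l_h)
lemma distr[simp]: "arr f \<Longrightarrow> arr f' \<Longrightarrow> arr g \<Longrightarrow> dom f' = dom f \<Longrightarrow> cod f' = cod f \<Longrightarrow> dom g = cod f \<Longrightarrow>
   g \<odot> (f \<oplus> f') = (g \<odot> f) \<oplus> (g \<odot> f')"
  by (metis arrD distr_r_h)
lemma comp_zero[simp]: "arr f \<Longrightarrow> Y = dom f \<Longrightarrow> X \<in> Obj C \<Longrightarrow> f \<odot> Zm C X Y = Zm C X (cod f)"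
  by (metis arrD comp_zero_h)
lemma zero_comp[simp]: "arr f \<Longrightarrow> X = cod f \<Longrightarrow> Y \<in> Obj C \<Longrightarrow> Zm C X Y \<odot> f = Zm C (dom f) Y"
  by (metis arrD zero_comp_h)
lemma add_zero[simp]: "arr f \<Longrightarrow> X = dom f \<Longrightarrow> Y = cod f \<Longrightarrow> f \<oplus> Zm C X Y = f"
  by (metis arrD add_zero_h)
lemma zero_add[simp]: "arr f \<Longrightarrow> X = dom f \<Longrightarrow> Y = cod f \<Longrightarrow> Zm C X Y \<oplus> f = f"
  by (metis arrD add_zero_h add_comm_h zero_hom hom_obj)
lemma add_assoc[simp]: "arr f \<Longrightarrow> arr g \<Longrightarrow> arr h \<Longrightarrow> dom g = dom f \<Longrightarrow> cod g = cod f \<Longrightarrow>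
   dom h = dom f \<Longrightarrow> cod h = cod f \<Longrightarrow> (f \<oplus> g) \<oplus> h = f \<oplus> (g \<oplus> h)"
  by (metis arrD add_assoc_h)
lemma add_comm: "arr f \<Longrightarrow> arr g \<Longrightarrow> dom g = dom f \<Longrightarrow> cod g = cod f \<Longrightarrow> f \<oplus> g = g \<oplus> f"
  by (metis arrD add_comm_h)
lemma add_lcomm: "arr f \<Longrightarrow> arr g \<Longrightarrow> arr h \<Longrightarrow> dom g = dom f \<Longrightarrow> cod g = cod f \<Longrightarrow>
   dom h = dom f \<Longrightarrow> cod h = cod f \<Longrightarrow> f \<oplus> (g \<oplus> h) = g \<oplus> (f \<oplus> h)"
  by (metis add_assoc add_comm arr_add dom_add cod_add)

lemmas add_ac = add_comm add_lcomm

definition biprod where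
  "biprod A B S i1 i2 p1 p2 \<longleftrightarrow>
       i1 \<in> Hom C A S \<and> i2 \<in> Hom C B S \<and> p1 \<in> Hom C S A \<and> p2 \<in> Hom C S B \<and>
       p1 \<odot> i1 = Idm C A \<and> p2 \<odot> i2 = Idm C B \<and>
       p2 \<odot> i1 = Zm C A B \<and> p1 \<odot> i2 = Zm C B A \<and>
       (i1 \<odot> p1) \<oplus> (i2 \<odot> p2) = Idm C S"

lemma biprod_ex: "A \<in> Obj C \<Longrightarrow> B \<in> Obj C \<Longrightarrow> \<exists>S i1 i2 p1 p2. biprod A B S i1 i2 p1 p2"
  using addv unfolding additive_def biprod_def by blast

lemma biprod_sym: "biprod A B S i1 i2 p1 p2 \<Longrightarrow> biprod B A S i2 i1 p2 p1"
  unfolding biprod_def by (metis add_comm_h comp_hom)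

lemma bp: assumes "biprod A B S i1 i2 p1 p2"
  shows "arr i1" "dom i1 = A" "cod i1 = S" "arr i2" "dom i2 = B" "cod i2 = S"
   "arr p1" "dom p1 = S" "cod p1 = A" "arr p2" "dom p2 = S" "cod p2 = B"
   "A \<in> Obj C" "B \<in> Obj C" "S \<in> Obj C"
   "p1 \<odot> i1 = Idm C A" "p2 \<odot> i2 = Idm C B" "p2 \<odot> i1 = Zm C A B" "p1 \<odot> i2 = Zm C B A"
   "(i1 \<odot> p1) \<oplus> (i2 \<odot> p2) = Idm C S"
  using assms unfolding biprod_def by (auto dest: homD hom_obj)

lemma bpc: assumes "biprod A B S i1 i2 p1 p2" "arr x"
  shows "cod x = A \<Longrightarrow> p1 \<odot> (i1 \<odot> x) = x" "cod x = B \<Longrightarrow> p2 \<odot> (i2 \<odot> x) = x"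
    "cod x = A \<Longrightarrow> p2 \<odot> (i1 \<odot> x) = Zm C (dom x) B" "cod x = B \<Longrightarrow> p1 \<odot> (i2 \<odot> x) = Zm C (dom x) A"
  using assms by (simp_all add: bp(1-19)[OF assms(1)] flip: assoc)

lemma ex1_eq: "\<exists>!x. Q x \<Longrightarrow> Q a \<Longrightarrow> Q b \<Longrightarrow> a = b" by blast

lemma arr_hom: "arr f \<Longrightarrow> dom f = X \<Longrightarrow> cod f = Y \<Longrightarrow> f \<in> Hom C X Y"
  using arrD by blast

lemma hom_simps: assumes "f \<in> Hom C X Y" shows "arr f" "dom f = X" "cod f = Y" "X \<in> Obj C" "Y \<in> Obj C"
  using assms homD hom_obj by blast+

lemma bp_uniq_out: assumes b: "biprod A B S i1 i2 p1 p2" and u: "u \<in> Hom C S X" "u' \<in> Hom C S X"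
  and e: "u \<odot> i1 = u' \<odot> i1" "u \<odot> i2 = u' \<odot> i2" shows "u = u'"
proof -
  have "u = u \<odot> Idm C S" using b u by (simp add: bp[OF b] hom_simps)
  also have "\<dots> = u \<odot> ((i1 \<odot> p1) \<oplus> (i2 \<odot> p2))" by (simp only: bp(20)[OF b])
  also have "\<dots> = (u \<odot> i1) \<odot> p1 \<oplus> (u \<odot> i2) \<odot> p2" using b u by (simp add: bp(1-19)[OF b] hom_simps)
  also have "\<dots> = (u' \<odot> i1) \<odot> p1 \<oplus> (u' \<odot> i2) \<odot> p2" using e by simp
  also have "\<dots> = u' \<odot> ((i1 \<odot> p1) \<oplus> (i2 \<odot> p2))" using b u by (simp add: bp(1-19)[OF b] hom_simps)
  also have "\<dots> = u' \<odot> Idm C S" by (simp only: bp(20)[OF b])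
  also have "\<dots> = u'" using b u by (simp add: bp[OF b] hom_simps)
  finally show ?thesis .
qed

lemma exK: "\<forall>(i,p)\<in>Confl C. kc_pair C i p"
  using ex unfolding exact_category_def by (elim conjE) assumption
lemma exIso: "\<forall>i p i' p' A B D A' B' D' a b c.
        (i, p) \<in> Confl C \<and> i \<in> Hom C A B \<and> p \<in> Hom C B D \<and>
        i' \<in> Hom C A' B' \<and> p' \<in> Hom C B' D' \<and>
        is_iso C a A A' \<and> is_iso C b B B' \<and> is_iso C c D D' \<and>
        Cmp C i' a = Cmp C b i \<and> Cmp C p' b = Cmp C c p \<longrightarrow> (i', p') \<in> Confl C"
  using ex unfolding exact_category_def by (elim conjE) assumption
lemma exIdE: "\<forall>A\<in>Obj C. adm_epi C (Idm C A)"
  using ex unfolding exact_category_def by (elim conjE) assumption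
lemma exCM: "\<forall>A B D i j. i \<in> Hom C A B \<and> j \<in> Hom C B D \<and> adm_mono C i \<and> adm_mono C j
        \<longrightarrow> adm_mono C (Cmp C j i)"
  using ex unfolding exact_category_def by (elim conjE) assumption
lemma exPO: "\<forall>A B A' i f. i \<in> Hom C A B \<and> adm_mono C i \<and> f \<in> Hom C A A' \<longrightarrow>
        (\<exists>B' i' f'. i' \<in> Hom C A' B' \<and> f' \<in> Hom C B B' \<and>
           Cmp C i' f = Cmp C f' i \<and> adm_mono C i' \<and>
           (\<forall>X\<in>Obj C. \<forall>g\<in>Hom C A' X. \<forall>h\<in>Hom C B X. Cmp C g f = Cmp C h i \<longrightarrow>
               (\<exists>!u. u \<in> Hom C B' X \<and> Cmp C u i' = g \<and> Cmp C u f' = h)))"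
  using ex unfolding exact_category_def by (elim conjE) assumption

lemma iso_id: "X \<in> Obj C \<Longrightarrow> is_iso C (Idm C X) X X"
  unfolding is_iso_def by (auto intro!: bexI[of _ "Idm C X"] id_hom)

lemma iso_closed: assumes "(i, p) \<in> Confl C" "i \<in> Hom C A B" "p \<in> Hom C B D"
  "i' \<in> Hom C A' B'" "p' \<in> Hom C B' D'" "is_iso C a A A'" "is_iso C b B B'" "is_iso C c D D'"
  "i' \<odot> a = b \<odot> i" "p' \<odot> b = c \<odot> p" shows "(i', p') \<in> Confl C"
  using exIso assms by blast

lemma kc_cok: assumes "(i, p) \<in> Confl C" "i \<in> Hom C A B" "p \<in> Hom C B D"
  shows "p \<odot> i = Zm C A D"
    "\<And>X f. X \<in> Obj C \<Longrightarrow> f \<in> Hom C B X \<Longrightarrow> f \<odot> i = Zm C A X \<Longrightarrow> \<exists>g\<in>Hom C D X. g \<odot> p = f"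
    "\<And>X g g'. g \<in> Hom C D X \<Longrightarrow> g' \<in> Hom C D X \<Longrightarrow> g \<odot> p = g' \<odot> p \<Longrightarrow> g = g'"
proof -
  have "kc_pair C i p" using exK assms(1) by fast
  then obtain A' B' D' where h: "i \<in> Hom C A' B'" "p \<in> Hom C B' D'" "p \<odot> i = Zm C A' D'"
     "\<forall>X\<in>Obj C. \<forall>f\<in>Hom C B' X. f \<odot> i = Zm C A' X \<longrightarrow> (\<exists>!g. g \<in> Hom C D' X \<and> g \<odot> p = f)"
    unfolding kc_pair_def by (elim exE conjE) (rule that; assumption)
  have eq: "A' = A" "B' = B" "D' = D" using h(1,2) assms(2,3) hom_uniq by blast+
  note h' = h[unfolded eq]
  show pi: "p \<odot> i = Zm C A D" using h'(3) .
  show "\<And>X f. X \<in> Obj C \<Longrightarrow> f \<in> Hom C B X \<Longrightarrow> f \<odot> i = Zm C A X \<Longrightarrow> \<exists>g\<in>Hom C D X. g \<odot> p = f"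
  proof -
    fix X f assume a: "X \<in> Obj C" "f \<in> Hom C B X" "f \<odot> i = Zm C A X"
    from h'(4)[rule_format, OF a] show "\<exists>g\<in>Hom C D X. g \<odot> p = f" by blast
  qed
  fix X g g' assume g: "g \<in> Hom C D X" "g' \<in> Hom C D X" "g \<odot> p = g' \<odot> p"
  have X: "X \<in> Obj C" using g hom_obj by blast
  have f: "g \<odot> p \<in> Hom C B X" using g(1) assms(3) comp_hom by blast
  have gpi: "(g \<odot> p) \<odot> i = Zm C A X" using g(1) assms(2,3) X pi by (simp add: hom_simps)
  have u: "\<exists>!x. x \<in> Hom C D X \<and> x \<odot> p = g \<odot> p" by (rule h'(4)[rule_format, OF X f gpi])
  show "g = g'" by (rule ex1_eq[OF u]) (use g in simp_all)
qed

lemma cok_confl: assumes am: "adm_mono C i" and hi: "i \<in> Hom C A B" and hp: "p \<in> Hom C B D"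
  and z: "p \<odot> i = Zm C A D"
  and ce: "\<And>X f. X \<in> Obj C \<Longrightarrow> f \<in> Hom C B X \<Longrightarrow> f \<odot> i = Zm C A X \<Longrightarrow> \<exists>g\<in>Hom C D X. g \<odot> p = f"
  and cu: "\<And>X g g'. g \<in> Hom C D X \<Longrightarrow> g' \<in> Hom C D X \<Longrightarrow> g \<odot> p = g' \<odot> p \<Longrightarrow> g = g'"
  shows "(i, p) \<in> Confl C"
proof -
  obtain q where q: "(i, q) \<in> Confl C" using am unfolding adm_mono_def by blast
  have "kc_pair C i q" using exK q by fast
  then obtain A' B' D' where h: "i \<in> Hom C A' B'" "q \<in> Hom C B' D'" unfolding kc_pair_def by (elim exE conjE) (rule that; assumption)
  have eq: "A' = A" "B' = B" using h(1) hi hom_uniq by blast+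
  have hq: "q \<in> Hom C B D'" using h(2) unfolding eq .
  note K = kc_cok[OF q hi hq]
  have D: "D \<in> Obj C" "D' \<in> Obj C" using hp hq hom_obj by blast+
  obtain c where c: "c \<in> Hom C D' D" "c \<odot> q = p" using K(2)[OF D(1) hp z] by blast
  obtain c' where c': "c' \<in> Hom C D D'" "c' \<odot> p = q" using ce[OF D(2) hq K(1)] by blast
  have "(c' \<odot> c) \<odot> q = Idm C D' \<odot> q" using c(1) c'(1) hq by (simp add: hom_simps c(2) c'(2))
  hence cc1: "c' \<odot> c = Idm C D'" by (rule K(3)[OF comp_hom[OF c(1) c'(1)] id_hom[OF D(2)]])
  have "(c \<odot> c') \<odot> p = Idm C D \<odot> p" using c(1) c'(1) hp by (simp add: hom_simps c(2) c'(2))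
  hence cc2: "c \<odot> c' = Idm C D" by (rule cu[OF comp_hom[OF c'(1) c(1)] id_hom[OF D(1)]])
  have iso: "is_iso C c D' D" unfolding is_iso_def using c(1) c'(1) cc1 cc2 by (intro conjI bexI[of _ c'])
  have AB: "A \<in> Obj C" "B \<in> Obj C" using hi hom_obj by blast+
  show ?thesis
    apply (rule iso_closed[OF q hi hq hi hp iso_id[OF AB(1)] iso_id[OF AB(2)] iso])
    using hi apply (simp add: hom_simps)
    using hp apply (simp add: hom_simps c(2))
    done
qed

lemma po_adm: assumes am: "adm_mono C i" and hi: "i \<in> Hom C A B" and hf: "f \<in> Hom C A A'"
  and hj: "j \<in> Hom C A' B'" and hf': "f' \<in> Hom C B B'" and sq: "j \<odot> f = f' \<odot> i"
  and pe: "\<And>X g h. X \<in> Obj C \<Longrightarrow> g \<in> Hom C A' X \<Longrightarrow> h \<in> Hom C B X \<Longrightarrow> g \<odot> f = h \<odot> i \<Longrightarrow>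
            \<exists>u\<in>Hom C B' X. u \<odot> j = g \<and> u \<odot> f' = h"
  and pu: "\<And>X u u'. u \<in> Hom C B' X \<Longrightarrow> u' \<in> Hom C B' X \<Longrightarrow> u \<odot> j = u' \<odot> j \<Longrightarrow> u \<odot> f' = u' \<odot> f' \<Longrightarrow> u = u'"
  shows "adm_mono C j"
proof -
  obtain B'' i'' f'' where P: "i'' \<in> Hom C A' B''" "f'' \<in> Hom C B B''" "i'' \<odot> f = f'' \<odot> i" "adm_mono C i''"
    "\<forall>X\<in>Obj C. \<forall>g\<in>Hom C A' X. \<forall>h\<in>Hom C B X. g \<odot> f = h \<odot> i \<longrightarrow>
               (\<exists>!u. u \<in> Hom C B'' X \<and> u \<odot> i'' = g \<and> u \<odot> f'' = h)"
    using exPO[rule_format, OF conjI[OF hi conjI[OF am hf]]] by blast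
  have O: "B' \<in> Obj C" "B'' \<in> Obj C" "A' \<in> Obj C" using hj P hom_obj by blast+
  obtain u where u: "u \<in> Hom C B'' B'" "u \<odot> i'' = j" "u \<odot> f'' = f'" using P(5)[rule_format, OF O(1) hj hf' sq] by blast
  obtain v where v: "v \<in> Hom C B' B''" "v \<odot> j = i''" "v \<odot> f' = f''" using pe[OF O(2) P(1) P(2) P(3)] by blast
  have "(v \<odot> u) \<odot> i'' = i''" "(v \<odot> u) \<odot> f'' = f''" using u(1) v(1) P(1,2) by (simp_all add: hom_simps u(2,3) v(2,3))
  moreover have "Idm C B'' \<odot> i'' = i''" "Idm C B'' \<odot> f'' = f''" using P by (simp_all add: hom_simps)
  ultimately have vu: "v \<odot> u = Idm C B''"
    using ex1_eq[OF P(5)[rule_format, OF O(2) P(1) P(2) P(3)], of "v \<odot> u" "Idm C B''"] comp_hom[OF u(1) v(1)] id_hom[OF O(2)] by simp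
  have "(u \<odot> v) \<odot> j = Idm C B' \<odot> j" "(u \<odot> v) \<odot> f' = Idm C B' \<odot> f'" using u(1) v(1) hj hf' by (simp_all add: hom_simps u(2,3) v(2,3))
  hence uv: "u \<odot> v = Idm C B'" by (rule pu[OF comp_hom[OF v(1) u(1)] id_hom[OF O(1)]])
  have iso: "is_iso C u B'' B'" unfolding is_iso_def using u(1) v(1) uv vu by (intro conjI bexI[of _ v])
  obtain q where q: "(i'', q) \<in> Confl C" using P(4) unfolding adm_mono_def by blast
  have "kc_pair C i'' q" using exK q by fast
  then obtain A2 B2 D where h: "i'' \<in> Hom C A2 B2" "q \<in> Hom C B2 D" unfolding kc_pair_def by (elim exE conjE) (rule that; assumption)
  have eq: "A2 = A'" "B2 = B''" using h P hom_uniq by blast+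
  have DO: "D \<in> Obj C" using h hom_obj by blast
  have "(j, q \<odot> v) \<in> Confl C"
    apply (rule iso_closed[OF q P(1) h(2)[unfolded eq] hj _ iso_id[OF O(3)] iso iso_id[OF DO]])
    using comp_hom v(1) h(2)[unfolded eq] apply blast
    using hj apply (simp add: hom_simps u(2))
    using u(1) v(1) h(2)[unfolded eq] apply (simp add: hom_simps vu)
    done
  thus ?thesis unfolding adm_mono_def by blast
qed


lemma comp_rew: "g \<odot> f = h \<Longrightarrow> arr x \<Longrightarrow> arr f \<Longrightarrow> arr g \<Longrightarrow> cod x = dom f \<Longrightarrow> dom g = cod f \<Longrightarrow> g \<odot> (f \<odot> x) = h \<odot> x"
  by (metis assoc)

lemma split_confl: assumes b: "biprod A B S i1 i2 p1 p2" shows "(i1, p2) \<in> Confl C"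
proof -
  note B = bp[OF b]
  have "adm_epi C (Idm C B)" using exIdE B(14) by blast
  then obtain z where z: "(z, Idm C B) \<in> Confl C" unfolding adm_epi_def by blast
  have "kc_pair C z (Idm C B)" using exK z by fast
  then obtain A0 B0 D0 where h: "z \<in> Hom C A0 B0" "Idm C B \<in> Hom C B0 D0"
    unfolding kc_pair_def by (elim exE conjE) (rule that; assumption)
  have eq: "B0 = B" "D0 = B" using hom_uniq[OF h(2) id_hom[OF B(14)]] by simp_all
  have hz: "z \<in> Hom C A0 B" using h(1) unfolding eq .
  have A0: "A0 \<in> Obj C" using hz hom_obj by blast
  have "Idm C B \<odot> z = Zm C A0 B" using kc_cok(1)[OF z hz id_hom[OF B(14)]] .
  hence zz: "z = Zm C A0 B" using hz by (simp add: hom_simps)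
  have amz: "adm_mono C z" using z unfolding adm_mono_def by blast
  have am: "adm_mono C i1"
  proof (rule po_adm[OF amz hz zero_hom[OF A0 B(13)]])
    show "i1 \<in> Hom C A S" "i2 \<in> Hom C B S" using B by (simp_all add: arr_hom)
    show "i1 \<odot> Zm C A0 A = i2 \<odot> z" using B A0 by (simp add: zz)
    fix X g h assume a: "X \<in> Obj C" "g \<in> Hom C A X" "h \<in> Hom C B X" "g \<odot> Zm C A0 A = h \<odot> z"
    show "\<exists>u\<in>Hom C S X. u \<odot> i1 = g \<and> u \<odot> i2 = h"
      apply (rule bexI[of _ "g \<odot> p1 \<oplus> h \<odot> p2"])
      using hom_simps[OF a(2)] hom_simps[OF a(3)] B by (simp_all add: arr_hom bpc[OF b])
  next
    fix X u u' assume a: "u \<in> Hom C S X" "u' \<in> Hom C S X" "u \<odot> i1 = u' \<odot> i1" "u \<odot> i2 = u' \<odot> i2"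
    show "u = u'" by (rule bp_uniq_out[OF b a])
  qed
  show ?thesis
  proof (rule cok_confl[OF am])
    show "i1 \<in> Hom C A S" "p2 \<in> Hom C S B" "p2 \<odot> i1 = Zm C A B" using B by (simp_all add: arr_hom)
    fix X f assume a: "X \<in> Obj C" "f \<in> Hom C S X" "f \<odot> i1 = Zm C A X"
    have "f \<odot> (i2 \<odot> p2) = f"
    proof (rule bp_uniq_out[OF b])
      show "f \<odot> (i2 \<odot> p2) \<in> Hom C S X" "f \<in> Hom C S X" using hom_simps[OF a(2)] B by (simp_all add: arr_hom)
      show "(f \<odot> (i2 \<odot> p2)) \<odot> i1 = f \<odot> i1" "(f \<odot> (i2 \<odot> p2)) \<odot> i2 = f \<odot> i2"
        using hom_simps[OF a(2)] a(3) B by simp_all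
    qed
    thus "\<exists>g\<in>Hom C B X. g \<odot> p2 = f" using hom_simps[OF a(2)] B by (intro bexI[of _ "f \<odot> i2"]) (simp_all add: arr_hom)
  next
    fix X g g' assume a: "g \<in> Hom C B X" "g' \<in> Hom C B X" "g \<odot> p2 = g' \<odot> p2"
    have "g = (g \<odot> p2) \<odot> i2" "g' = (g' \<odot> p2) \<odot> i2" using a(1,2) B by (simp_all add: hom_simps)
    thus "g = g'" using a(3) by simp
  qed
qed

lemma po_sum: assumes am: "adm_mono C i" and hi: "i \<in> Hom C A B"
  and ba: "biprod A K SA x1 x2 y1 y2" and bb: "biprod B K SB z1 z2 w1 w2"
  shows "adm_mono C (z1 \<odot> i \<odot> y1 \<oplus> z2 \<odot> y2)"
proof -
  note BA = bp[OF ba] and BB = bp[OF bb] and I = hom_simps[OF hi]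
  have hM: "z1 \<odot> i \<odot> y1 \<oplus> z2 \<odot> y2 \<in> Hom C SA SB" using BA BB I by (simp add: arr_hom)
  have Mx1: "(z1 \<odot> i \<odot> y1 \<oplus> z2 \<odot> y2) \<odot> x1 = z1 \<odot> i" using BA BB I by (simp add: bpc[OF ba])
  have Mx2: "(z1 \<odot> i \<odot> y1 \<oplus> z2 \<odot> y2) \<odot> x2 = z2" using BA BB I by (simp add: bpc[OF ba])
  show ?thesis
  proof (rule po_adm[OF am hi _ hM])
    show "x1 \<in> Hom C A SA" "z1 \<in> Hom C B SB" using BA BB by (simp_all add: arr_hom)
    show "(z1 \<odot> i \<odot> y1 \<oplus> z2 \<odot> y2) \<odot> x1 = z1 \<odot> i" by (rule Mx1)
    fix X g h assume a: "X \<in> Obj C" "g \<in> Hom C SA X" "h \<in> Hom C B X" "g \<odot> x1 = h \<odot> i"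
    note G = hom_simps[OF a(2)] and H = hom_simps[OF a(3)]
    let ?u = "h \<odot> w1 \<oplus> g \<odot> x2 \<odot> w2"
    have hu: "?u \<in> Hom C SB X" using BA BB G H by (simp add: arr_hom)
    have u1: "?u \<odot> z1 = h" using BA BB G H by (simp add: bpc[OF bb])
    have u2: "?u \<odot> z2 = g \<odot> x2" using BA BB G H by (simp add: bpc[OF bb])
    have "?u \<odot> (z1 \<odot> i \<odot> y1 \<oplus> z2 \<odot> y2) = g"
    proof (rule bp_uniq_out[OF ba])
      show "?u \<odot> (z1 \<odot> i \<odot> y1 \<oplus> z2 \<odot> y2) \<in> Hom C SA X" using hu hM comp_hom by blast
      show "g \<in> Hom C SA X" by fact
      have "(?u \<odot> (z1 \<odot> i \<odot> y1 \<oplus> z2 \<odot> y2)) \<odot> x1 = ?u \<odot> (z1 \<odot> i)"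
        using BA BB G H I Mx1 by (simp del: distl distr)
      also have "\<dots> = h \<odot> i" by (rule comp_rew[OF u1]) (use BA BB G H I hu in \<open>simp_all add: hom_simps\<close>)
      finally show "(?u \<odot> (z1 \<odot> i \<odot> y1 \<oplus> z2 \<odot> y2)) \<odot> x1 = g \<odot> x1" using a(4) by simp
      have "(?u \<odot> (z1 \<odot> i \<odot> y1 \<oplus> z2 \<odot> y2)) \<odot> x2 = ?u \<odot> z2"
        using BA BB G H I Mx2 by (simp del: distl distr)
      thus "(?u \<odot> (z1 \<odot> i \<odot> y1 \<oplus> z2 \<odot> y2)) \<odot> x2 = g \<odot> x2" using u2 by simp
    qed
    thus "\<exists>u\<in>Hom C SB X. u \<odot> (z1 \<odot> i \<odot> y1 \<oplus> z2 \<odot> y2) = g \<and> u \<odot> z1 = h" using hu u1 by blast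
  next
    fix X u u' assume a: "u \<in> Hom C SB X" "u' \<in> Hom C SB X"
      "u \<odot> (z1 \<odot> i \<odot> y1 \<oplus> z2 \<odot> y2) = u' \<odot> (z1 \<odot> i \<odot> y1 \<oplus> z2 \<odot> y2)" "u \<odot> z1 = u' \<odot> z1"
    have "u \<odot> z2 = (u \<odot> (z1 \<odot> i \<odot> y1 \<oplus> z2 \<odot> y2)) \<odot> x2" "u' \<odot> z2 = (u' \<odot> (z1 \<odot> i \<odot> y1 \<oplus> z2 \<odot> y2)) \<odot> x2"
      using a(1,2) hM BA hom_simps[OF a(1)] hom_simps[OF a(2)] hom_simps[OF hM] by (simp_all del: distl distr add: Mx2)
    hence "u \<odot> z2 = u' \<odot> z2" using a(3) by simp
    thus "u = u'" by (rule bp_uniq_out[OF bb a(1,2) a(4)])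
  qed
qed


lemma ds_confl:
  assumes c1: "(i, p) \<in> Confl C" and hi: "i \<in> Hom C A B" and hp: "p \<in> Hom C B D"
  and c2: "(i', p') \<in> Confl C" and hi': "i' \<in> Hom C A' B'" and hp': "p' \<in> Hom C B' D'"
  and ba: "biprod A A' SA a1 a2 q1 q2" and bb: "biprod B B' SB b1 b2 r1 r2"
  and bd: "biprod D D' SD c1 c2 s1 s2"
  shows "(b1 \<odot> i \<odot> q1 \<oplus> b2 \<odot> i' \<odot> q2, c1 \<odot> p \<odot> r1 \<oplus> c2 \<odot> p' \<odot> r2) \<in> Confl C"
proof -
  note BA = bp[OF ba] and BB = bp[OF bb] and BD = bp[OF bd]
  note I = hom_simps[OF hi] hom_simps[OF hp] hom_simps[OF hi'] hom_simps[OF hp']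
  note K1 = kc_cok[OF c1 hi hp] and K2 = kc_cok[OF c2 hi' hp']
  note BC = bpc[OF ba] bpc[OF bb] bpc[OF bd]
  have pi1: "\<And>x. arr x \<Longrightarrow> cod x = A \<Longrightarrow> p \<odot> (i \<odot> x) = Zm C (dom x) D"
    using I by (simp add: comp_rew[OF K1(1)])
  have pi2: "\<And>x. arr x \<Longrightarrow> cod x = A' \<Longrightarrow> p' \<odot> (i' \<odot> x) = Zm C (dom x) D'"
    using I by (simp add: comp_rew[OF K2(1)])
  obtain T t1 t2 u1 u2 where bt: "biprod B A' T t1 t2 u1 u2" using biprod_ex BB(13) BA(14) by blast
  note BT = bp[OF bt]
  have ami: "adm_mono C i" using c1 unfolding adm_mono_def by blast
  have ami': "adm_mono C i'" using c2 unfolding adm_mono_def by blast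
  have m1: "adm_mono C (t1 \<odot> i \<odot> q1 \<oplus> t2 \<odot> q2)" by (rule po_sum[OF ami hi ba bt])
  have m2: "adm_mono C (b2 \<odot> i' \<odot> u2 \<oplus> b1 \<odot> u1)"
    by (rule po_sum[OF ami' hi' biprod_sym[OF bt] biprod_sym[OF bb]])
  have h1: "t1 \<odot> i \<odot> q1 \<oplus> t2 \<odot> q2 \<in> Hom C SA T" using BA BT I by (simp add: arr_hom)
  have h2: "b2 \<odot> i' \<odot> u2 \<oplus> b1 \<odot> u1 \<in> Hom C T SB" using BB BT I by (simp add: arr_hom)
  have cm: "(b2 \<odot> i' \<odot> u2 \<oplus> b1 \<odot> u1) \<odot> (t1 \<odot> i \<odot> q1 \<oplus> t2 \<odot> q2) = b1 \<odot> i \<odot> q1 \<oplus> b2 \<odot> i' \<odot> q2"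
    using BA BB BT I by (simp add: bpc[OF bt] add_ac)
  have amM: "adm_mono C (b1 \<odot> i \<odot> q1 \<oplus> b2 \<odot> i' \<odot> q2)"
    using exCM[rule_format, OF conjI[OF h1 conjI[OF h2 conjI[OF m1 m2]]]] unfolding cm .
  let ?M = "b1 \<odot> i \<odot> q1 \<oplus> b2 \<odot> i' \<odot> q2" and ?E = "c1 \<odot> p \<odot> r1 \<oplus> c2 \<odot> p' \<odot> r2"
  have hM: "?M \<in> Hom C SA SB" using BA BB I by (simp add: arr_hom)
  have hE: "?E \<in> Hom C SB SD" using BD BB I by (simp add: arr_hom)
  have Ma1: "?M \<odot> a1 = b1 \<odot> i" and Ma2: "?M \<odot> a2 = b2 \<odot> i'" using BA BB I by (simp_all add: BC)
  have Eb1: "?E \<odot> b1 = c1 \<odot> p" and Eb2: "?E \<odot> b2 = c2 \<odot> p'" using BD BB I by (simp_all add: BC)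
  show ?thesis
  proof (rule cok_confl[OF amM hM hE])
    show "?E \<odot> ?M = Zm C SA SD" using BA BB BD I by (simp add: BC pi1 pi2)
    fix X f assume a: "X \<in> Obj C" "f \<in> Hom C SB X" "f \<odot> ?M = Zm C SA X"
    note F = hom_simps[OF a(2)]
    have "(f \<odot> b1) \<odot> i = (f \<odot> ?M) \<odot> a1" using F BA BB I by (simp del: distl distr add: Ma1)
    also have "\<dots> = Zm C A X" using a(1,3) BA by simp
    finally have z1: "(f \<odot> b1) \<odot> i = Zm C A X" .
    have hf1: "f \<odot> b1 \<in> Hom C B X" using F BB by (simp add: arr_hom)
    obtain g1 where g1: "g1 \<in> Hom C D X" "g1 \<odot> p = f \<odot> b1" using K1(2)[OF a(1) hf1 z1] by blast
    have "(f \<odot> b2) \<odot> i' = (f \<odot> ?M) \<odot> a2" using F BA BB I by (simp del: distl distr add: Ma2)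
    also have "\<dots> = Zm C A' X" using a(1,3) BA by simp
    finally have z2: "(f \<odot> b2) \<odot> i' = Zm C A' X" .
    have hf2: "f \<odot> b2 \<in> Hom C B' X" using F BB by (simp add: arr_hom)
    obtain g2 where g2: "g2 \<in> Hom C D' X" "g2 \<odot> p' = f \<odot> b2" using K2(2)[OF a(1) hf2 z2] by blast
    note G = hom_simps[OF g1(1)] hom_simps[OF g2(1)]
    let ?g = "g1 \<odot> s1 \<oplus> g2 \<odot> s2"
    have hg: "?g \<in> Hom C SD X" using G BD by (simp add: arr_hom)
    have "?g \<odot> ?E = f"
    proof (rule bp_uniq_out[OF bb])
      show "?g \<odot> ?E \<in> Hom C SB X" using hg hE comp_hom by blast
      show "f \<in> Hom C SB X" by fact
      have "(?g \<odot> ?E) \<odot> b1 = ?g \<odot> (c1 \<odot> p)" using G BD BB I by (simp del: distl distr add: Eb1)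
      also have "\<dots> = f \<odot> b1" using G BD BB I F by (simp add: BC g1(2))
      finally show "(?g \<odot> ?E) \<odot> b1 = f \<odot> b1" .
      have "(?g \<odot> ?E) \<odot> b2 = ?g \<odot> (c2 \<odot> p')" using G BD BB I by (simp del: distl distr add: Eb2)
      also have "\<dots> = f \<odot> b2" using G BD BB I F by (simp add: BC g2(2))
      finally show "(?g \<odot> ?E) \<odot> b2 = f \<odot> b2" .
    qed
    thus "\<exists>g\<in>Hom C SD X. g \<odot> ?E = f" using hg by blast
  next
    fix X g g' assume a: "g \<in> Hom C SD X" "g' \<in> Hom C SD X" "g \<odot> ?E = g' \<odot> ?E"
    note G = hom_simps[OF a(1)] hom_simps[OF a(2)]
    have "(g \<odot> c1) \<odot> p = (g \<odot> ?E) \<odot> b1" "(g' \<odot> c1) \<odot> p = (g' \<odot> ?E) \<odot> b1"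
      using G BD BB I by (simp_all del: distl distr add: Eb1)
    hence e1: "g \<odot> c1 = g' \<odot> c1"
      using K1(3) a(3) comp_hom[OF _ a(1)] comp_hom[OF _ a(2)] BD by (metis arr_hom)
    have "(g \<odot> c2) \<odot> p' = (g \<odot> ?E) \<odot> b2" "(g' \<odot> c2) \<odot> p' = (g' \<odot> ?E) \<odot> b2"
      using G BD BB I by (simp_all del: distl distr add: Eb2)
    hence e2: "g \<odot> c2 = g' \<odot> c2"
      using K2(3) a(3) comp_hom[OF _ a(1)] comp_hom[OF _ a(2)] BD by (metis arr_hom)
    show "g = g'" by (rule bp_uniq_out[OF bd a(1,2) e1 e2])
  qed
qed


lemma bp_uniq_in: assumes b: "biprod A B S i1 i2 p1 p2" and u: "u \<in> Hom C X S" "u' \<in> Hom C X S"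
  and e: "p1 \<odot> u = p1 \<odot> u'" "p2 \<odot> u = p2 \<odot> u'" shows "u = u'"
proof -
  note B = bp(1-19)[OF b] and U = hom_simps[OF u(1)] hom_simps[OF u(2)]
  have "u = Idm C S \<odot> u" using B U by simp
  also have "\<dots> = ((i1 \<odot> p1) \<oplus> (i2 \<odot> p2)) \<odot> u" by (simp only: bp(20)[OF b])
  also have "\<dots> = i1 \<odot> (p1 \<odot> u) \<oplus> i2 \<odot> (p2 \<odot> u)" using B U by simp
  also have "\<dots> = i1 \<odot> (p1 \<odot> u') \<oplus> i2 \<odot> (p2 \<odot> u')" using e by simp
  also have "\<dots> = ((i1 \<odot> p1) \<oplus> (i2 \<odot> p2)) \<odot> u'" using B U by simp
  also have "\<dots> = Idm C S \<odot> u'" by (simp only: bp(20)[OF b])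
  also have "\<dots> = u'" using B U by simp
  finally show ?thesis .
qed

lemma zero_out: "zero_obj C Z \<Longrightarrow> f \<in> Hom C Z X \<Longrightarrow> f = Zm C Z X"
  unfolding zero_obj_def by (metis hom_obj zero_hom)
lemma zero_in: "zero_obj C Z \<Longrightarrow> f \<in> Hom C X Z \<Longrightarrow> f = Zm C X Z"
  unfolding zero_obj_def by (metis hom_obj zero_hom)

lemma biprod_zero: assumes b: "biprod A B S i1 i2 p1 p2" and za: "zero_obj C A" and zb: "zero_obj C B"
  shows "zero_obj C S"
proof -
  note B = bp[OF b]
  have out: "f = Zm C S X" if f: "f \<in> Hom C S X" for f X
  proof (rule bp_uniq_out[OF b f])
    note F = hom_simps[OF f]
    show "Zm C S X \<in> Hom C S X" using F B by (simp add: zero_hom)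
    have "f \<odot> i1 = Zm C A X" by (rule zero_out[OF za]) (use F B in \<open>simp add: arr_hom\<close>)
    thus "f \<odot> i1 = Zm C S X \<odot> i1" using F B by simp
    have "f \<odot> i2 = Zm C B X" by (rule zero_out[OF zb]) (use F B in \<open>simp add: arr_hom\<close>)
    thus "f \<odot> i2 = Zm C S X \<odot> i2" using F B by simp
  qed
  have inn: "f = Zm C X S" if f: "f \<in> Hom C X S" for f X
  proof (rule bp_uniq_in[OF b f])
    note F = hom_simps[OF f]
    show "Zm C X S \<in> Hom C X S" using F B by (simp add: zero_hom)
    have "p1 \<odot> f = Zm C X A" by (rule zero_in[OF za]) (use F B in \<open>simp add: arr_hom\<close>)
    thus "p1 \<odot> f = p1 \<odot> Zm C X S" using F B by simp
    have "p2 \<odot> f = Zm C X B" by (rule zero_in[OF zb]) (use F B in \<open>simp add: arr_hom\<close>)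
    thus "p2 \<odot> f = p2 \<odot> Zm C X S" using F B by simp
  qed
  show ?thesis unfolding zero_obj_def
  proof (intro conjI ballI)
    show "S \<in> Obj C" using B by simp
    fix X assume X: "X \<in> Obj C"
    show "\<exists>!f. f \<in> Hom C S X" using out zero_hom[OF B(15) X] by blast
    show "\<exists>!f. f \<in> Hom C X S" using inn zero_hom[OF X B(15)] by blast
  qed
qed

lemma choice5: "(\<And>n. \<exists>a b c d e. Q n a b c d e) \<Longrightarrow> \<exists>A B C' D E. \<forall>n. Q n (A n) (B n) (C' n) (D n) (E n)"
  by metis

lemma acyc_sum:
  assumes bS: "\<And>n. biprod (P n) (P n) (S n) (i1 n) (i2 n) (p1 n) (p2 n)"
  and a: "acyclic C P d" and b: "acyclic C P e"
  shows "acyclic C S (\<lambda>n. i1 (n-1) \<odot> d n \<odot> p1 n \<oplus> i2 (n-1) \<odot> e n \<odot> p2 n)"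
proof -
  obtain J ee m where A: "\<And>n. J n \<in> Obj C" "\<And>n. ee n \<in> Hom C (P n) (J (n - 1))" "\<And>n. m n \<in> Hom C (J n) (P n)"
     "\<And>n. d n = m (n - 1) \<odot> ee n" "\<And>n. (m n, ee n) \<in> Confl C"
    using a unfolding acyclic_def by blast
  obtain J' ee' m' where A': "\<And>n. J' n \<in> Obj C" "\<And>n. ee' n \<in> Hom C (P n) (J' (n - 1))" "\<And>n. m' n \<in> Hom C (J' n) (P n)"
     "\<And>n. e n = m' (n - 1) \<odot> ee' n" "\<And>n. (m' n, ee' n) \<in> Confl C"
    using b unfolding acyclic_def by blast
  have "\<And>n. \<exists>T t1 t2 u1 u2. biprod (J n) (J' n) T t1 t2 u1 u2" using biprod_ex A(1) A'(1) by blast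
  then obtain T t1 t2 u1 u2 where bT: "\<And>n. biprod (J n) (J' n) (T n) (t1 n) (t2 n) (u1 n) (u2 n)"
    using choice5[of "\<lambda>n T t1 t2 u1 u2. biprod (J n) (J' n) T t1 t2 u1 u2"] by blast
  show ?thesis unfolding acyclic_def
  proof (intro exI allI conjI)
    fix n :: int
    note BT = bp[OF bT[of n]] bp[OF bT[of "n-1"]] and BS = bp[OF bS[of n]] bp[OF bS[of "n-1"]]
    note H = hom_simps[OF A(2)[of n]] hom_simps[OF A(3)[of n]] hom_simps[OF A(3)[of "n-1"]]
       hom_simps[OF A'(2)[of n]] hom_simps[OF A'(3)[of n]] hom_simps[OF A'(3)[of "n-1"]]
    show "T n \<in> Obj C" using BT by simp
    show "t1 (n-1) \<odot> ee n \<odot> p1 n \<oplus> t2 (n-1) \<odot> ee' n \<odot> p2 n \<in> Hom C (S n) (T (n - 1))"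
      using BT BS H by (simp add: arr_hom)
    show "i1 n \<odot> m n \<odot> u1 n \<oplus> i2 n \<odot> m' n \<odot> u2 n \<in> Hom C (T n) (S n)"
      using BT BS H by (simp add: arr_hom)
    show "i1 (n-1) \<odot> d n \<odot> p1 n \<oplus> i2 (n-1) \<odot> e n \<odot> p2 n =
       (i1 (n-1) \<odot> m (n-1) \<odot> u1 (n-1) \<oplus> i2 (n-1) \<odot> m' (n-1) \<odot> u2 (n-1)) \<odot>
       (t1 (n-1) \<odot> ee n \<odot> p1 n \<oplus> t2 (n-1) \<odot> ee' n \<odot> p2 n)"
      using BT BS H by (simp add: A(4) A'(4) bpc[OF bT[of "n-1"]])
    show "(i1 n \<odot> m n \<odot> u1 n \<oplus> i2 n \<odot> m' n \<odot> u2 n, t1 (n-1) \<odot> ee n \<odot> p1 n \<oplus> t2 (n-1) \<odot> ee' n \<odot> p2 n) \<in> Confl C"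
      by (rule ds_confl[OF A(5) A(3) A(2) A'(5) A'(3) A'(2) bT bS bT])
  qed
qed


context
  fixes A A' S S' i1 i2 p1 p2 j1 j2 q1 q2 f g
  assumes b: "biprod A A S i1 i2 p1 p2" and b': "biprod A' A' S' j1 j2 q1 q2"
    and hf: "f \<in> Hom C A A'" and hg: "g \<in> Hom C A A'"
begin

lemma ms_hom: "j1 \<odot> f \<odot> p1 \<oplus> j2 \<odot> g \<odot> p2 \<in> Hom C S S'"
  using bp[OF b] bp[OF b'] hom_simps[OF hf] hom_simps[OF hg] by (simp add: arr_hom)
lemma ms_i1: "(j1 \<odot> f \<odot> p1 \<oplus> j2 \<odot> g \<odot> p2) \<odot> i1 = j1 \<odot> f"
  using bp[OF b] bp[OF b'] hom_simps[OF hf] hom_simps[OF hg] by (simp add: bpc[OF b])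
lemma ms_p2: "q2 \<odot> (j1 \<odot> f \<odot> p1 \<oplus> j2 \<odot> g \<odot> p2) = g \<odot> p2"
  using bp[OF b] bp[OF b'] hom_simps[OF hf] hom_simps[OF hg] by (simp add: bpc[OF b'])
lemma ms_swap: "(j1 \<odot> q2 \<oplus> j2 \<odot> q1) \<odot> (j1 \<odot> f \<odot> p1 \<oplus> j2 \<odot> g \<odot> p2) =
   (j1 \<odot> g \<odot> p1 \<oplus> j2 \<odot> f \<odot> p2) \<odot> (i1 \<odot> p2 \<oplus> i2 \<odot> p1)"
  using bp[OF b] bp[OF b'] hom_simps[OF hf] hom_simps[OF hg] by (simp add: bpc[OF b] bpc[OF b'] add_ac)
lemma ms_id: "Idm C S' \<odot> (j1 \<odot> f \<odot> p1 \<oplus> j2 \<odot> g \<odot> p2) = (j1 \<odot> f \<odot> p1 \<oplus> j2 \<odot> g \<odot> p2) \<odot> Idm C S"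
  using bp[OF b] bp[OF b'] hom_simps[OF hf] hom_simps[OF hg] by simp
end

lemma sw_hom: "biprod A A S i1 i2 p1 p2 \<Longrightarrow> i1 \<odot> p2 \<oplus> i2 \<odot> p1 \<in> Hom C S S"
  using bp by (simp add: arr_hom)
lemma sw_inv: assumes b: "biprod A A S i1 i2 p1 p2"
  shows "((i1 \<odot> p2) \<oplus> (i2 \<odot> p1)) \<odot> ((i1 \<odot> p2) \<oplus> (i2 \<odot> p1)) = Idm C S"
  using b by (simp add: bp[OF b] bpc[OF b] add_ac)

lemma bcx_sum:
  assumes bS: "\<And>n. biprod (P n) (P n) (S n) (i1 n) (i2 n) (p1 n) (p2 n)"
  and zP: "\<And>n. n < 0 \<or> n > int k \<Longrightarrow> zero_obj C (P n)"
  and hf: "\<And>n. f n \<in> Hom C (P n) (P (n - 1))" and hg: "\<And>n. g n \<in> Hom C (P n) (P (n - 1))"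
  and hf': "\<And>n. f' n \<in> Hom C (P n) (P (n - 1))" and hg': "\<And>n. g' n \<in> Hom C (P n) (P (n - 1))"
  and af: "acyclic C P f" and ag: "acyclic C P g" and af': "acyclic C P f'" and ag': "acyclic C P g'"
  shows "is_bcx C k (S, (\<lambda>n. i1 (n-1) \<odot> f n \<odot> p1 n \<oplus> i2 (n-1) \<odot> g n \<odot> p2 n),
                        (\<lambda>n. i1 (n-1) \<odot> f' n \<odot> p1 n \<oplus> i2 (n-1) \<odot> g' n \<odot> p2 n))"
  unfolding is_bcx_def prod.case
proof (intro conjI allI impI)
  fix n :: int
  show "S n \<in> Obj C" using bp[OF bS[of n]] by simp
  show "i1 (n-1) \<odot> f n \<odot> p1 n \<oplus> i2 (n-1) \<odot> g n \<odot> p2 n \<in> Hom C (S n) (S (n - 1))"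
    by (rule ms_hom[OF bS bS hf hg])
  show "i1 (n-1) \<odot> f' n \<odot> p1 n \<oplus> i2 (n-1) \<odot> g' n \<odot> p2 n \<in> Hom C (S n) (S (n - 1))"
    by (rule ms_hom[OF bS bS hf' hg'])
  assume "n < 0 \<or> int k < n"
  thus "zero_obj C (S n)" using biprod_zero[OF bS zP zP] by blast
next
  show "acyclic C S (\<lambda>n. i1 (n-1) \<odot> f n \<odot> p1 n \<oplus> i2 (n-1) \<odot> g n \<odot> p2 n)" by (rule acyc_sum[OF bS af ag])
  show "acyclic C S (\<lambda>n. i1 (n-1) \<odot> f' n \<odot> p1 n \<oplus> i2 (n-1) \<odot> g' n \<odot> p2 n)" by (rule acyc_sum[OF bS af' ag'])
qed

end

theorem lemma3p2:
  fixes C :: "('o,'m) excat" and k :: nat and X :: "('o,'m) bcx"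
  assumes "exact_category C" and "k \<ge> 1" and "is_bcx C k X"
  shows "L1_eq C k (gen (sw X)) (\<lambda>z. - gen X z)"
proof -
  interpret xc C by unfold_locales (rule assms(1))
  obtain P d d' where X: "X = (P, d, d')" by (cases X) auto
  have HX: "\<And>n. P n \<in> Obj C" "\<And>n. d n \<in> Hom C (P n) (P (n - 1))" "\<And>n. d' n \<in> Hom C (P n) (P (n - 1))"
    "\<And>n. n < 0 \<or> n > int k \<Longrightarrow> zero_obj C (P n)" "acyclic C P d" "acyclic C P d'"
    using assms(3) unfolding is_bcx_def X prod.case by blast+
  have "\<And>n. \<exists>S i1 i2 p1 p2. biprod (P n) (P n) S i1 i2 p1 p2" using biprod_ex HX(1) by blast
  then obtain S i1 i2 p1 p2 where bS: "\<And>n. biprod (P n) (P n) (S n) (i1 n) (i2 n) (p1 n) (p2 n)"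
    using choice5[of "\<lambda>n S i1 i2 p1 p2. biprod (P n) (P n) S i1 i2 p1 p2"] by blast
  define sm where "sm f g = (\<lambda>n. i1 (n-1) \<odot> f n \<odot> p1 n \<oplus> i2 (n-1) \<odot> g n \<odot> p2 n)" for f g :: "int \<Rightarrow> 'm"
  define s where "s = (\<lambda>n. i1 n \<odot> p2 n \<oplus> i2 n \<odot> p1 n)"
  define Q where "Q = (S, sm d d', sm d' d)"
  define D where "D = (S, sm d d', sm d d')"
  define Y where "Y = (S, sm d d, sm d d)"
  define Sig where "Sig = (\<lambda>z. \<Sum>i\<in>{0..k}. (-1) ^ i * gen (bpair C (S (int i)) (S (int i)) (Idm C (S (int i))) (s (int i))) z)"
  have bQ: "is_bcx C k Q" unfolding Q_def sm_def by (rule bcx_sum[OF bS HX(4) HX(2,3,3,2) HX(5,6,6,5)])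
  have bD: "is_bcx C k D" unfolding D_def sm_def by (rule bcx_sum[OF bS HX(4) HX(2,3,2,3) HX(5,6,5,6)])
  have bY: "is_bcx C k Y" unfolding Y_def sm_def by (rule bcx_sum[OF bS HX(4) HX(2,2,2,2) HX(5,5,5,5)])
  have bswX: "is_bcx C k (sw X)" using assms(3) unfolding is_bcx_def X sw_def prod.case by blast
  have cm_id: "chain_map C S (sm f g) S (sm f g) (\<lambda>n. Idm C (S n))"
    if "\<And>n. f n \<in> Hom C (P n) (P (n - 1))" "\<And>n. g n \<in> Hom C (P n) (P (n - 1))" for f g
    unfolding chain_map_def sm_def
    using ms_id[OF bS bS that] id_hom bp(15)[OF bS] by blast
  have cm_s: "chain_map C S (sm f g) S (sm g f) s"
    if "\<And>n. f n \<in> Hom C (P n) (P (n - 1))" "\<And>n. g n \<in> Hom C (P n) (P (n - 1))" for f g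
    unfolding chain_map_def sm_def s_def
    using ms_swap[OF bS bS that] sw_hom[OF bS] by blast
  have invs: "\<forall>n. Idm C (S n) \<odot> Idm C (S n) = Idm C (S n) \<and> s n \<odot> s n = Idm C (S n)"
    using bp(15)[OF bS] sw_inv[OF bS] unfolding s_def by simp
  have r1: "(\<lambda>z. gen D z - gen Q z - Sig z) \<in> rel_L C k"
    unfolding rel_L_def mem_Collect_eq
    apply (rule exI[of _ S], rule exI[of _ "sm d d'"], rule exI[of _ "sm d' d"], rule exI[of _ "sm d d'"],
           rule exI[of _ "sm d d'"], rule exI[of _ "\<lambda>n. Idm C (S n)"], rule exI[of _ s])
    using bQ bD cm_id[OF HX(2,3)] cm_s[OF HX(3,2)] invs unfolding Q_def D_def Sig_def by simp
  have r2: "(\<lambda>z. gen Y z - gen Y z - Sig z) \<in> rel_L C k"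
    unfolding rel_L_def mem_Collect_eq
    apply (rule exI[of _ S], rule exI[of _ "sm d d"], rule exI[of _ "sm d d"], rule exI[of _ "sm d d"],
           rule exI[of _ "sm d d"], rule exI[of _ "\<lambda>n. Idm C (S n)"], rule exI[of _ s])
    using bY cm_id[OF HX(2,2)] cm_s[OF HX(2,2)] invs unfolding Y_def Sig_def by simp
  have r3: "gen D \<in> rel_K C k" unfolding rel_K_def using bD by (auto simp: D_def diagonal_def)
  have ch1: "chain_map C P f S (sm f g) i1"
    if "\<And>n. f n \<in> Hom C (P n) (P (n - 1))" "\<And>n. g n \<in> Hom C (P n) (P (n - 1))" for f g
    unfolding chain_map_def sm_def using ms_i1[OF bS bS that] bp(1)[OF bS] by (metis arr_hom bp(2,3)[OF bS])
  have ch2: "chain_map C S (sm f g) P g p2"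
    if "\<And>n. f n \<in> Hom C (P n) (P (n - 1))" "\<And>n. g n \<in> Hom C (P n) (P (n - 1))" for f g
    unfolding chain_map_def sm_def using ms_p2[OF bS bS that] bp(10)[OF bS] by (metis arr_hom bp(11,12)[OF bS])
  have r4: "(\<lambda>z. gen Q z - gen X z - gen (sw X) z) \<in> rel_B C k"
    unfolding rel_B_def mem_Collect_eq
    apply (rule exI[of _ X], rule exI[of _ Q], rule exI[of _ "sw X"], rule exI[of _ i1], rule exI[of _ p2])
    using assms(3) bQ bswX ch1[OF HX(2,3)] ch1[OF HX(3,2)] ch2[OF HX(2,3)] ch2[OF HX(3,2)] split_confl[OF bS]
    unfolding X Q_def sw_def bmor_def prod.case by simp
  let ?R = "rel_B C k \<union> rel_K C k \<union> rel_L C k"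
  have z1: "(\<lambda>z. gen D z - gen Q z - Sig z) \<in> zspan ?R" using r1 by (blast intro: zspan_base)
  have z2: "(\<lambda>z. gen Y z - gen Y z - Sig z) \<in> zspan ?R" using r2 by (blast intro: zspan_base)
  have z3: "gen D \<in> zspan ?R" using r3 by (blast intro: zspan_base)
  have z4: "(\<lambda>z. gen Q z - gen X z - gen (sw X) z) \<in> zspan ?R" using r4 by (blast intro: zspan_base)
  have a1: "(\<lambda>z. gen D z - (gen D z - gen Q z - Sig z)) \<in> zspan ?R" using zspan_diff[OF z3 z1] by simp
  have a0: "(\<lambda>z. 0 - (gen Y z - gen Y z - Sig z)) \<in> zspan ?R" using zspan_diff[OF zspan_zero z2] by simp
  have a2: "(\<lambda>z. (gen D z - (gen D z - gen Q z - Sig z)) - (0 - (gen Y z - gen Y z - Sig z))) \<in> zspan ?R"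
    using zspan_diff[OF a1 a0] by simp
  have a3: "(\<lambda>z. ((gen D z - (gen D z - gen Q z - Sig z)) - (0 - (gen Y z - gen Y z - Sig z)))
       - (gen Q z - gen X z - gen (sw X) z)) \<in> zspan ?R"
    using zspan_diff[OF a2 z4] by simp
  have eq: "(\<lambda>z. gen (sw X) z - - gen X z) = (\<lambda>z. ((gen D z - (gen D z - gen Q z - Sig z)) - (0 - (gen Y z - gen Y z - Sig z)))
       - (gen Q z - gen X z - gen (sw X) z))" by (rule ext) simp
  show ?thesis unfolding L1_eq_def eq by (rule a3)
qed

end
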